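(* Let $q,w\in L^1[-1,1]$ be real-valued with $q(x)=q(-x)$ and $w(-x)=-w(x)$ for a.e. $x$, and $xw(x)>0$ for a.e. $x\in[-1,1]$. Suppose there are constants $q_0<0$ and $w_0>0$ with $q(x)\ge q_0$ and $|w(x)|\ge w_0$ for a.e. $x\in[-1,1]$. Then every purely imaginary eigenvalue $\lambda$ (i.e. $\lambda=i\alpha$, $\alpha\in\mathbb{R}\setminus\{0\}$) of the problem $-y''+qy=\lambda wy$, $y(-1)=y(1)=0$, satisfies $$|\operatorname{Im}\lambda|\le \frac{4(-q_0)^{3/2}}{w_0}.$$
   Context: A number $\lambda\in\mathbb{C}$ is an eigenvalue of $-y''+qy=\lambda wy$, $y(-1)=y(1)=0$, if there is a nontrivial function $y$ with $y,y'$ absolutely continuous on $[-1,1]$ satisfying $-y''+qy=\lambda wy$ a.e. on $[-1,1]$ and $y(-1)=y(1)=0$. *)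

theory Defs
  imports "HOL-Analysis.Analysis"
begin

definition abs_continuous_on :: "real set \<Rightarrow> (real \<Rightarrow> 'a::real_normed_vector) \<Rightarrow> bool" where
  "abs_continuous_on S f \<longleftrightarrow>
     (\<forall>\<epsilon>>0. \<exists>\<delta>>0. \<forall>(n::nat) (a::nat \<Rightarrow> real) (b::nat \<Rightarrow> real).
        (\<forall>k<n. a k \<le> b k \<and> {a k..b k} \<subseteq> S) \<and>
        (\<forall>i<n. \<forall>j<n. i \<noteq> j \<longrightarrow> b i \<le> a j \<or> b j \<le> a i) \<and>
        (\<Sum>k<n. b k - a k) < \<delta>
        \<longrightarrow> (\<Sum>k<n. norm (f (b k) - f (a k))) < \<epsilon>)"

definition is_eigenvalue :: "(real \<Rightarrow> real) \<Rightarrow> (real \<Rightarrow> real) \<Rightarrow> complex \<Rightarrow> bool" where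
  "is_eigenvalue q w lam \<longleftrightarrow>
     (\<exists>(y::real \<Rightarrow> complex) (y'::real \<Rightarrow> complex).
        (\<exists>x\<in>{-1..1}. y x \<noteq> 0) \<and>
        abs_continuous_on {-1..1} y \<and> abs_continuous_on {-1..1} y' \<and>
        (\<forall>x\<in>{-1..1}. (y has_vector_derivative y' x) (at x within {-1..1})) \<and>
        (AE x in lebesgue. x \<in> {-1..1} \<longrightarrow>
            (\<exists>y''. (y' has_vector_derivative y'') (at x within {-1..1}) \<and>
                   - y'' + complex_of_real (q x) * y x = lam * complex_of_real (w x) * y x)) \<and>
        y (-1) = 0 \<and> y 1 = 0)"

end

theory Submission
  imports Defs
begin


definition fam :: "real set \<Rightarrow> nat \<Rightarrow> (nat \<Rightarrow> real) \<Rightarrow> (nat \<Rightarrow> real) \<Rightarrow> bool" where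
  "fam S n a b \<longleftrightarrow> (\<forall>k<n. a k \<le> b k \<and> {a k..b k} \<subseteq> S) \<and>
        (\<forall>i<n. \<forall>j<n. i \<noteq> j \<longrightarrow> b i \<le> a j \<or> b j \<le> a i)"

lemma ac_iff: "abs_continuous_on S f \<longleftrightarrow>
  (\<forall>e>0. \<exists>d>0. \<forall>n a b. fam S n a b \<and> (\<Sum>k<n. b k - a k) < d \<longrightarrow> (\<Sum>k<n. norm (f (b k) - f (a k))) < e)"
  unfolding abs_continuous_on_def fam_def by simp

lemma acD:
  assumes "abs_continuous_on S f" "e > 0"
  obtains d where "d > 0" "\<And>n a b. fam S n a b \<Longrightarrow> (\<Sum>k<n. b k - a k) < d \<Longrightarrow> (\<Sum>k<n. norm (f (b k) - f (a k))) < e"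
  using assms unfolding ac_iff by metis

lemma fam_subset: "fam S n a b \<Longrightarrow> S \<subseteq> T \<Longrightarrow> fam T n a b"
  unfolding fam_def by auto

lemma ac_subset:
  assumes "abs_continuous_on T f" "S \<subseteq> T"
  shows "abs_continuous_on S f"
  unfolding ac_iff
proof (intro allI impI)
  fix e :: real assume "e > 0"
  then obtain d where "d > 0" and H: "\<And>n a b. fam T n a b \<Longrightarrow> (\<Sum>k<n. b k - a k) < d \<Longrightarrow> (\<Sum>k<n. norm (f (b k) - f (a k))) < e"
    using acD[OF assms(1)] by blast
  then show "\<exists>d>0. \<forall>n a b. fam S n a b \<and> (\<Sum>k<n. b k - a k) < d \<longrightarrow> (\<Sum>k<n. norm (f (b k) - f (a k))) < e"
    using fam_subset[OF _ assms(2)] by blast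
qed

lemma ac_small:
  assumes "abs_continuous_on S f" "e > 0"
  obtains d where "d > 0" "\<And>u v. u \<le> v \<Longrightarrow> {u..v} \<subseteq> S \<Longrightarrow> v - u < d \<Longrightarrow> norm (f v - f u) < e"
proof -
  obtain d where d: "d > 0" and H: "\<And>n a b. fam S n a b \<Longrightarrow> (\<Sum>k<n. b k - a k) < d \<Longrightarrow> (\<Sum>k<n. norm (f (b k) - f (a k))) < e"
    using acD[OF assms] by blast
  show ?thesis
  proof (rule that[OF d])
    fix u v assume "u \<le> v" "{u..v} \<subseteq> S" "v - u < d"
    then show "norm (f v - f u) < e"
      using H[of 1 "\<lambda>_. u" "\<lambda>_. v"] by (auto simp: fam_def)
  qed
qed

lemma ac_continuous:
  assumes "abs_continuous_on {a..b} f"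
  shows "continuous_on {a..b} f"
  unfolding continuous_on_iff
proof (intro ballI allI impI)
  fix x e :: real assume x: "x \<in> {a..b}" and e: "e > 0"
  obtain d where d: "d > 0" and H: "\<And>u v. u \<le> v \<Longrightarrow> {u..v} \<subseteq> {a..b} \<Longrightarrow> v - u < d \<Longrightarrow> norm (f v - f u) < e"
    using ac_small[OF assms e] by blast
  show "\<exists>d>0. \<forall>x'\<in>{a..b}. dist x' x < d \<longrightarrow> dist (f x') (f x) < e"
  proof (intro exI[of _ d] conjI ballI impI d)
    fix x' assume x': "x' \<in> {a..b}" "dist x' x < d"
    show "dist (f x') (f x) < e"
    proof (cases "x \<le> x'")
      case True
      then show ?thesis using H[of x x'] x x' by (auto simp: dist_norm dist_real_def)
    next
      case False
      then show ?thesis using H[of x' x] x x' by (auto simp: dist_norm dist_real_def norm_minus_commute)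
    qed
  qed
qed

lemma ac_cnj:
  assumes "abs_continuous_on S f"
  shows "abs_continuous_on S (\<lambda>x. cnj (f x))"
  using assms unfolding abs_continuous_on_def
  by (simp flip: complex_cnj_diff)

lemma ac_mult:
  fixes f g :: "real \<Rightarrow> complex"
  assumes f: "abs_continuous_on {a..b} f" and g: "abs_continuous_on {a..b} g"
  shows "abs_continuous_on {a..b} (\<lambda>x. f x * g x)"
proof -
  have bf: "bounded (f ` {a..b})"
    by (rule compact_imp_bounded[OF compact_continuous_image[OF ac_continuous[OF f] compact_Icc]])
  have bg: "bounded (g ` {a..b})"
    by (rule compact_imp_bounded[OF compact_continuous_image[OF ac_continuous[OF g] compact_Icc]])
  from bf obtain M1 where M1: "M1 > 0" "\<forall>z\<in>f ` {a..b}. norm z \<le> M1"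
    unfolding bounded_pos by blast
  from bg obtain M2 where M2: "M2 > 0" "\<forall>z\<in>g ` {a..b}. norm z \<le> M2"
    unfolding bounded_pos by blast
  define M where "M = M1 + M2"
  have M: "M > 0" "\<And>x. x \<in> {a..b} \<Longrightarrow> norm (f x) \<le> M \<and> norm (g x) \<le> M"
  proof -
    show "M > 0" using M1 M2 by (simp add: M_def)
    fix x assume x: "x \<in> {a..b}"
    have "norm (f x) \<le> M1" "norm (g x) \<le> M2" using M1(2) M2(2) x by auto
    then show "norm (f x) \<le> M \<and> norm (g x) \<le> M" using M1 M2 by (simp add: M_def)
  qed
  show ?thesis
    unfolding ac_iff
  proof (intro allI impI)
    fix e :: real assume e: "e > 0"
    have e2: "e / (2*M) > 0" using e M by simp
    obtain d1 where d1: "d1 > 0" and H1: "\<And>n a' b'. fam {a..b} n a' b' \<Longrightarrow> (\<Sum>k<n. b' k - a' k) < d1 \<Longrightarrow> (\<Sum>k<n. norm (f (b' k) - f (a' k))) < e / (2*M)"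
      using acD[OF f e2] by blast
    obtain d2 where d2: "d2 > 0" and H2: "\<And>n a' b'. fam {a..b} n a' b' \<Longrightarrow> (\<Sum>k<n. b' k - a' k) < d2 \<Longrightarrow> (\<Sum>k<n. norm (g (b' k) - g (a' k))) < e / (2*M)"
      using acD[OF g e2] by blast
    show "\<exists>d>0. \<forall>n a' b'. fam {a..b} n a' b' \<and> (\<Sum>k<n. b' k - a' k) < d
        \<longrightarrow> (\<Sum>k<n. norm (f (b' k) * g (b' k) - f (a' k) * g (a' k))) < e"
    proof (intro exI[of _ "min d1 d2"] conjI allI impI)
      show "min d1 d2 > 0" using d1 d2 by simp
      fix n :: nat and a' b' :: "nat \<Rightarrow> real"
      assume A: "fam {a..b} n a' b' \<and> (\<Sum>k<n. b' k - a' k) < min d1 d2"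
      have s1: "(\<Sum>k<n. norm (f (b' k) - f (a' k))) < e / (2*M)"
        using H1 A by auto
      have s2: "(\<Sum>k<n. norm (g (b' k) - g (a' k))) < e / (2*M)"
        using H2 A by auto
      have pt: "norm (f (b' k) * g (b' k) - f (a' k) * g (a' k))
          \<le> M * norm (g (b' k) - g (a' k)) + M * norm (f (b' k) - f (a' k))" if k: "k < n" for k
      proof -
        have ab: "a' k \<in> {a..b}" "b' k \<in> {a..b}" using A k by (auto simp: fam_def)
        have "f (b' k) * g (b' k) - f (a' k) * g (a' k) = f (b' k) * (g (b' k) - g (a' k)) + (f (b' k) - f (a' k)) * g (a' k)"
          by (simp add: algebra_simps)
        also have "norm \<dots> \<le> norm (f (b' k)) * norm (g (b' k) - g (a' k)) + norm (f (b' k) - f (a' k)) * norm (g (a' k))"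
          by (metis norm_mult norm_triangle_ineq)
        also have "\<dots> \<le> M * norm (g (b' k) - g (a' k)) + norm (f (b' k) - f (a' k)) * M"
          using M(2)[OF ab(1)] M(2)[OF ab(2)]
          by (intro add_mono mult_right_mono mult_left_mono) auto
        finally show ?thesis by (simp add: mult.commute)
      qed
      have "(\<Sum>k<n. norm (f (b' k) * g (b' k) - f (a' k) * g (a' k)))
          \<le> (\<Sum>k<n. M * norm (g (b' k) - g (a' k)) + M * norm (f (b' k) - f (a' k)))"
        by (rule sum_mono) (use pt in auto)
      also have "\<dots> = M * (\<Sum>k<n. norm (g (b' k) - g (a' k))) + M * (\<Sum>k<n. norm (f (b' k) - f (a' k)))"
        by (simp add: sum.distrib sum_distrib_left)
      also have "\<dots> < M * (e / (2*M)) + M * (e / (2*M))"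
        using s1 s2 M(1) by (intro add_strict_mono mult_strict_left_mono) auto
      also have "\<dots> = e" using M(1) by (simp add: field_simps)
      finally show "(\<Sum>k<n. norm (f (b' k) * g (b' k) - f (a' k) * g (a' k))) < e" .
    qed
  qed
qed




lemma nonoverlap_real:
  fixes u1 v1 u2 v2 :: real
  assumes "u1 < v1" "u2 < v2" "{u1<..<v1} \<inter> {u2<..<v2} = {}"
  shows "v1 \<le> u2 \<or> v2 \<le> u1"
proof (rule ccontr)
  assume "\<not> (v1 \<le> u2 \<or> v2 \<le> u1)"
  then have "(max u1 u2 + min v1 v2) / 2 \<in> {u1<..<v1} \<inter> {u2<..<v2}"
    using assms(1,2) by (auto simp: max_def min_def)
  then show False using assms(3) by blast
qed

lemma ftc_ac:
  fixes G g :: "real \<Rightarrow> complex"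
  assumes ab: "a \<le> b" and ac: "abs_continuous_on {a..b} G" and E: "negligible E"
    and der: "\<And>x. x \<in> {a..b} - E \<Longrightarrow> (G has_vector_derivative g x) (at x within {a..b})"
  shows "(g has_integral (G b - G a)) {a..b}"
proof -
  define f where "f x = (if x \<in> E then 0 else g x)" for x
  have "(f has_integral (G b - G a)) {a..b}"
    unfolding has_integral_real
  proof (intro allI impI)
    fix e :: real assume e: "e > 0"
    define \<epsilon> where "\<epsilon> = e / (2 * (b - a + 1))"
    have \<epsilon>pos: "\<epsilon> > 0" using e ab by (simp add: \<epsilon>_def)
    have "\<exists>r>0. \<forall>y\<in>{a..b}. norm (y - x) < r \<longrightarrow> norm (G y - G x - (y - x) *\<^sub>R g x) \<le> \<epsilon> * norm (y - x)"
      if "x \<in> {a..b} - E" for x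
      using der[OF that] \<epsilon>pos unfolding has_vector_derivative_def has_derivative_within_alt by blast
    then obtain rD where rD: "\<And>x. x \<in> {a..b} - E \<Longrightarrow> rD x > 0 \<and> (\<forall>y\<in>{a..b}. norm (y - x) < rD x \<longrightarrow> norm (G y - G x - (y - x) *\<^sub>R g x) \<le> \<epsilon> * norm (y - x))"
      by metis
    have e2: "e/2 > 0" using e by simp
    obtain \<delta> where \<delta>: "\<delta> > 0" and H\<delta>: "\<And>n a' b'. fam {a..b} n a' b' \<Longrightarrow> (\<Sum>k<n. b' k - a' k) < \<delta> \<Longrightarrow> (\<Sum>k<n. norm (G (b' k) - G (a' k))) < e/2"
      using acD[OF ac e2] by blast
    obtain T where T: "open T" "E \<subseteq> T" "(T - E) \<in> lmeasurable" "emeasure lebesgue (T - E) < ennreal \<delta>"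
      using sets_lebesgue_outer_open[OF negligible_imp_sets[OF E] \<delta>] by metis
    have "\<exists>r>0. ball x r \<subseteq> T" if "x \<in> E" for x
      using T(1,2) that open_contains_ball by blast
    then obtain rE where rE: "\<And>x. x \<in> E \<Longrightarrow> rE x > 0 \<and> ball x (rE x) \<subseteq> T" by metis
    define \<gamma> where "\<gamma> x = (if x \<in> E then ball x (rE x) else if x \<in> {a..b} then ball x (rD x) else ball x 1)" for x
    have gauge: "gauge \<gamma>"
      unfolding gauge_def \<gamma>_def using rD rE by auto
    have meas: "measure lebesgue (T - E) < \<delta>"
      using T(3,4) \<delta> by (simp add: emeasure_eq_measure2 ennreal_less_iff)
    show "\<exists>\<gamma>. gauge \<gamma> \<and> (\<forall>p. p tagged_division_of {a..b} \<and> \<gamma> fine p \<longrightarrow> norm ((\<Sum>(x,K)\<in>p. measure lborel K *\<^sub>R f x) - (G b - G a)) < e)"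
    proof (intro exI[of _ \<gamma>] conjI allI impI gauge)
      fix p assume "p tagged_division_of {a..b} \<and> \<gamma> fine p"
      then have p: "p tagged_division_of {a..b}" and fine: "\<gamma> fine p" by auto
      have finp: "finite p" using p by blast
      define \<Delta> where "\<Delta> K = G (Sup K) - G (Inf K)" for K
      have eq: "(\<Sum>(x,K)\<in>p. measure lborel K *\<^sub>R f x) - (G b - G a) = (\<Sum>(x,K)\<in>p. measure lborel K *\<^sub>R f x - \<Delta> K)"
        using additive_tagged_division_1[OF ab p, of G] by (simp add: \<Delta>_def sum_subtractf split_def)
      have Kform: "\<exists>u v. K = {u..v} \<and> u \<le> x \<and> x \<le> v \<and> a \<le> u \<and> v \<le> b \<and> K \<subseteq> \<gamma> x" if xK: "(x,K) \<in> p" for x K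
      proof -
        obtain u v where K: "K = cbox u v" using tagged_division_ofD(4)[OF p xK] by blast
        have xin: "x \<in> K" "K \<subseteq> {a..b}" using tagged_division_ofD(2,3)[OF p xK] by auto
        have "K \<subseteq> \<gamma> x" using fine xK by (auto simp: fine_def)
        then show ?thesis using xin K by auto
      qed
      have pt: "norm (measure lborel K *\<^sub>R f x - \<Delta> K) \<le> \<epsilon> * measure lborel K + (if x \<in> E \<and> measure lborel K \<noteq> 0 then norm (\<Delta> K) else 0)"
        if xK: "(x,K) \<in> p" for x K
      proof -
        obtain u v where K: "K = {u..v}" and uv: "u \<le> x" "x \<le> v" "a \<le> u" "v \<le> b" and sub: "K \<subseteq> \<gamma> x"
          using Kform[OF xK] by blast
        have SI: "Sup K = v" "Inf K = u" "measure lborel K = v - u" using uv K by auto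
        show ?thesis
        proof (cases "x \<in> E")
          case True
          then have "f x = 0" by (simp add: f_def)
          moreover have "measure lborel K = 0 \<Longrightarrow> \<Delta> K = 0" using SI by (simp add: \<Delta>_def)
          ultimately show ?thesis using SI \<epsilon>pos uv True by auto
        next
          case False
          then have x: "x \<in> {a..b} - E" using uv by auto
          have "u \<in> \<gamma> x" "v \<in> \<gamma> x" using sub K uv by auto
          then have du: "norm (u - x) < rD x" and dv: "norm (v - x) < rD x" using False x
            by (auto simp: \<gamma>_def dist_real_def abs_minus_commute)
          have vab: "v \<in> {a..b}" "u \<in> {a..b}" using uv by auto
          have 1: "norm (G v - G x - (v - x) *\<^sub>R g x) \<le> \<epsilon> * norm (v - x)" using conjunct2[OF rD[OF x]] dv vab by blast
          have 2: "norm (G u - G x - (u - x) *\<^sub>R g x) \<le> \<epsilon> * norm (u - x)" using conjunct2[OF rD[OF x]] du vab by blast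
          have 3: "measure lborel K *\<^sub>R f x - \<Delta> K = (G u - G x - (u - x) *\<^sub>R g x) - (G v - G x - (v - x) *\<^sub>R g x)"
            using False by (simp add: SI \<Delta>_def f_def algebra_simps)
          have "norm (measure lborel K *\<^sub>R f x - \<Delta> K) \<le> \<epsilon> * norm (u - x) + \<epsilon> * norm (v - x)"
            unfolding 3 using 1 2 norm_triangle_ineq4 by (smt (verit))
          also have "\<dots> = \<epsilon> * measure lborel K" using uv unfolding SI(3) by (simp add: algebra_simps)
          finally show ?thesis using False by simp
        qed
      qed
      define S2 where "S2 = {z\<in>p. fst z \<in> E \<and> measure lborel (snd z) \<noteq> 0}"
      have sumS2: "(\<Sum>(x,K)\<in>p. (if x \<in> E \<and> measure lborel K \<noteq> 0 then norm (\<Delta> K) else 0)) = (\<Sum>(x,K)\<in>S2. norm (\<Delta> K))"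
        unfolding S2_def using finp by (simp add: sum.inter_filter split_def)
      have contsum: "(\<Sum>(x,K)\<in>p. measure lborel K) = b - a"
        using additive_content_tagged_division[of p a b] p ab by simp
      have S2small: "(\<Sum>(x,K)\<in>S2. norm (\<Delta> K)) < e/2"
      proof -
        have finS2: "finite S2" using finp S2_def by auto
        define n where "n = card S2"
        obtain h where h: "bij_betw h {0..<n} S2" using ex_bij_betw_nat_finite[OF finS2] n_def by blast
        define a' where "a' k = Inf (snd (h k))" for k
        define b' where "b' k = Sup (snd (h k))" for k
        have S2prop: "\<exists>u v. K = {u..v} \<and> u < v \<and> K \<subseteq> {a..b} \<and> K \<subseteq> T \<and> (x,K) \<in> p" if "(x,K) \<in> S2" for x K
        proof -
          have xK: "(x,K) \<in> p" and xE: "x \<in> E" and c: "measure lborel K \<noteq> 0" using that by (auto simp: S2_def)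
          obtain u v where K: "K = {u..v}" and uv: "u \<le> x" "x \<le> v" "a \<le> u" "v \<le> b" and sub: "K \<subseteq> \<gamma> x"
            using Kform[OF xK] by blast
          have "u \<noteq> v" using c K by auto
          moreover have "K \<subseteq> T" using sub rE[OF xE] xE by (auto simp: \<gamma>_def)
          ultimately show ?thesis using K uv xK by auto
        qed
        have hS2: "h k \<in> S2" if "k < n" for k using h that by (auto simp: bij_betw_def)
        have hK: "\<exists>u v. snd (h k) = {u..v} \<and> u < v \<and> a' k = u \<and> b' k = v \<and> {u..v} \<subseteq> {a..b} \<and> h k \<in> p"
          if kn: "k < n" for k
        proof -
          obtain x K where hk: "h k = (x,K)" by fastforce
          have "(x,K) \<in> S2" using hS2[OF kn] hk by simp
          then obtain u v where "K = {u..v}" "u < v" "K \<subseteq> {a..b}" "(x,K) \<in> p" using S2prop by blast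
          then show ?thesis using hk by (auto simp: a'_def b'_def)
        qed
        have fam: "fam {a..b} n a' b'"
          unfolding fam_def
        proof (rule conjI; intro allI impI)
          fix k assume "k < n"
          then show "a' k \<le> b' k \<and> {a' k..b' k} \<subseteq> {a..b}" using hK by fastforce
        next
          fix i j assume ij: "i < n" "j < n" "i \<noteq> j"
          obtain u1 v1 where 1: "snd (h i) = {u1..v1}" "u1 < v1" "a' i = u1" "b' i = v1" "h i \<in> p" using hK ij by blast
          obtain u2 v2 where 2: "snd (h j) = {u2..v2}" "u2 < v2" "a' j = u2" "b' j = v2" "h j \<in> p" using hK ij by blast
          have "h i \<noteq> h j" using h ij by (auto simp: bij_betw_def inj_on_def)
          then have "interior (snd (h i)) \<inter> interior (snd (h j)) = {}"
            using tagged_division_ofD(5)[OF p, of "fst (h i)" "snd (h i)" "fst (h j)" "snd (h j)"] 1(5) 2(5) by auto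
          then have "{u1<..<v1} \<inter> {u2<..<v2} = {}" using 1 2 by simp
          then show "b' i \<le> a' j \<or> b' j \<le> a' i" using nonoverlap_real[OF 1(2) 2(2)] 1 2 by simp
        qed
        have phi: "(\<Sum>k<n. \<phi> (h k)) = (\<Sum>z\<in>S2. \<phi> z)" for \<phi> :: "real \<times> real set \<Rightarrow> real"
          using sum.reindex_bij_betw[OF h, of \<phi>] by (simp add: lessThan_atLeast0)
        have lenS: "(\<Sum>k<n. b' k - a' k) = (\<Sum>(x,K)\<in>S2. measure lborel K)"
        proof -
          have "(\<Sum>k<n. b' k - a' k) = (\<Sum>k<n. measure lborel (snd (h k)))"
            by (rule sum.cong) (use hK in fastforce)+
          also have "\<dots> = (\<Sum>(x,K)\<in>S2. measure lborel K)" using phi[of "\<lambda>z. measure lborel (snd z)"] by (simp add: split_def)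
          finally show ?thesis .
        qed
        have injS2: "inj_on snd S2"
        proof (rule inj_onI)
          fix z1 z2 assume z: "z1 \<in> S2" "z2 \<in> S2" "snd z1 = snd z2"
          show "z1 = z2"
          proof (rule ccontr)
            assume ne: "z1 \<noteq> z2"
            obtain u v where K: "snd z1 = {u..v}" "u < v" "z1 \<in> p"
              using S2prop[of "fst z1" "snd z1"] z(1) by auto
            have "z2 \<in> p" using z(2) by (auto simp: S2_def)
            then have "interior (snd z1) \<inter> interior (snd z2) = {}"
              using tagged_division_ofD(5)[OF p, of "fst z1" "snd z1" "fst z2" "snd z2"] K(3) ne by auto
            then have "{u<..<v} = {}" using K z(3) by simp
            then show False using K(2) by simp
          qed
        qed
        have "(\<Sum>(x,K)\<in>S2. measure lborel K) = (\<Sum>K\<in>snd ` S2. measure lborel K)"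
          using sum.reindex[OF injS2, of "measure lborel"] by (simp add: split_def)
        also have "\<dots> = (\<Sum>K\<in>snd ` S2. measure lebesgue K)"
        proof (rule sum.cong)
          fix K assume "K \<in> snd ` S2"
          then obtain u v where "K = {u..v}" "u < v" using S2prop by force
          then show "measure lborel K = measure lebesgue K" by simp
        qed simp
        also have "\<dots> = measure lebesgue (\<Union>(snd ` S2))"
        proof -
          have d1: "snd ` p division_of \<Union>(snd ` p)"
            using division_of_tagged_division[OF p] division_ofD(6) by metis
          have "snd ` S2 \<subseteq> snd ` p" by (auto simp: S2_def)
          then have "snd ` S2 division_of \<Union>(snd ` S2)" using division_of_subset[OF d1] by blast
          then show ?thesis by (rule content_division)
        qed
        also have "\<dots> \<le> measure lebesgue ((T - E) \<union> E)"
        proof (rule measure_mono_fmeasurable)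
          show "\<Union>(snd ` S2) \<subseteq> (T - E) \<union> E" using S2prop by force
          have d1: "snd ` p division_of \<Union>(snd ` p)"
            using division_of_tagged_division[OF p] division_ofD(6) by metis
          have "snd ` S2 \<subseteq> snd ` p" by (auto simp: S2_def)
          then have "snd ` S2 division_of \<Union>(snd ` S2)" using division_of_subset[OF d1] by blast
          then show "\<Union>(snd ` S2) \<in> sets lebesgue" using lmeasurable_division fmeasurableD by blast
          show "(T - E) \<union> E \<in> lmeasurable"
            using T(3) negligible_imp_measurable[OF E] by (rule fmeasurable.Un)
        qed
        also have "\<dots> \<le> measure lebesgue (T - E) + measure lebesgue E"
          using T(3) negligible_imp_sets[OF E] by (intro measure_Un_le) auto
        also have "\<dots> < \<delta>" using meas negligible_imp_measure0[OF E] by simp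
        finally have "(\<Sum>k<n. b' k - a' k) < \<delta>" using lenS by simp
        then have "(\<Sum>k<n. norm (G (b' k) - G (a' k))) < e/2" using H\<delta>[OF fam] by blast
        moreover have "(\<Sum>k<n. norm (G (b' k) - G (a' k))) = (\<Sum>(x,K)\<in>S2. norm (\<Delta> K))"
          using phi[of "\<lambda>z. norm (\<Delta> (snd z))"] by (simp add: split_def a'_def b'_def \<Delta>_def)
        ultimately show ?thesis by simp
      qed
      have "norm ((\<Sum>(x,K)\<in>p. measure lborel K *\<^sub>R f x) - (G b - G a)) \<le> (\<Sum>(x,K)\<in>p. norm (measure lborel K *\<^sub>R f x - \<Delta> K))"
        unfolding eq by (rule order_trans[OF norm_sum]) (simp add: split_def)
      also have "\<dots> \<le> (\<Sum>(x,K)\<in>p. \<epsilon> * measure lborel K + (if x \<in> E \<and> measure lborel K \<noteq> 0 then norm (\<Delta> K) else 0))"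
        by (rule sum_mono) (use pt in auto)
      also have "\<dots> = \<epsilon> * (\<Sum>(x,K)\<in>p. measure lborel K) + (\<Sum>(x,K)\<in>p. (if x \<in> E \<and> measure lborel K \<noteq> 0 then norm (\<Delta> K) else 0))"
        by (simp add: sum.distrib sum_distrib_left split_def)
      also have "\<dots> = \<epsilon> * (b - a) + (\<Sum>(x,K)\<in>S2. norm (\<Delta> K))"
        using contsum sumS2 by simp
      also have "\<dots> < e/2 + e/2"
      proof -
        have "\<epsilon> * (b - a) < e / 2"
          using e ab by (simp add: \<epsilon>_def field_simps)
        then show ?thesis using S2small by simp
      qed
      finally show "norm ((\<Sum>(x,K)\<in>p. measure lborel K *\<^sub>R f x) - (G b - G a)) < e" by simp
    qed
  qed
  then show ?thesis
    by (rule has_integral_spike[OF E, rotated]) (simp add: f_def)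
qed




lemma int_sub_le:
  fixes f :: "real \<Rightarrow> real"
  assumes "continuous_on {a..b} f" "\<And>x. x \<in> {a..b} \<Longrightarrow> 0 \<le> f x" "a \<le> c" "c \<le> d" "d \<le> b"
  shows "integral {c..d} f \<le> integral {a..b} f"
proof -
  have i: "f integrable_on {a..b}" by (rule integrable_continuous_interval[OF assms(1)])
  have icb: "f integrable_on {c..b}" using integrable_subinterval_real[OF i] assms by auto
  have e1: "integral {a..c} f + integral {c..b} f = integral {a..b} f"
    using Henstock_Kurzweil_Integration.integral_combine[OF assms(3) _ i] assms by auto
  have e2: "integral {c..d} f + integral {d..b} f = integral {c..b} f"
    using Henstock_Kurzweil_Integration.integral_combine[OF assms(4,5) icb] .
  have "0 \<le> integral {a..c} f"
    using assms by (intro integral_nonneg integrable_subinterval_real[OF i]) auto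
  moreover have "0 \<le> integral {d..b} f"
    using assms by (intro integral_nonneg integrable_subinterval_real[OF i]) auto
  ultimately show ?thesis using e1 e2 by linarith
qed

lemma int_lin:
  fixes f g :: "real \<Rightarrow> real"
  assumes "f integrable_on S" "g integrable_on S"
  shows "integral S (\<lambda>x. A * f x + B * g x) = A * integral S f + B * integral S g"
proof -
  have "(\<lambda>x. A * f x) integrable_on S" using integrable_cmul[OF assms(1), of A] by simp
  moreover have "(\<lambda>x. B * g x) integrable_on S" using integrable_cmul[OF assms(2), of B] by simp
  ultimately show ?thesis by (simp add: integral_add)
qed

lemma amgm_s: "(s::real) > 0 \<Longrightarrow> x * y \<le> (s * y^2 + x^2 / s) / 2"
proof -
  assume s: "s > 0"
  have "0 \<le> (s * y - x)^2 / s" using s by simp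
  also have "\<dots> = s * y^2 - 2 * x * y + x^2 / s" using s by (simp add: field_simps power2_eq_square)
  finally show ?thesis by simp
qed

lemma half:
  fixes u v Ip :: "real \<Rightarrow> real" and Q c :: real
  assumes cu: "continuous_on {0..1} u" and cv: "continuous_on {0..1} v" and cI: "continuous_on {0..1} Ip"
    and nn: "\<And>x. x \<in> {0..1} \<Longrightarrow> 0 \<le> u x \<and> 0 \<le> v x"
    and bnd: "\<And>x. x \<in> {0..1} \<Longrightarrow> \<bar>Ip x\<bar> \<le> u x * v x"
    and en: "integral {0..1} (\<lambda>x. (v x)^2) \<le> Q * integral {0..1} (\<lambda>x. (u x)^2)"
    and pw: "\<And>x. x \<in> {0..1} \<Longrightarrow> u x \<le> integral {x..1} v"
    and low: "\<And>x. x \<in> {0..1} \<Longrightarrow> c * integral {x..1} (\<lambda>t. (u t)^2) \<le> \<bar>Ip x\<bar>"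
    and Q: "0 < Q" and N: "0 < integral {0..1} (\<lambda>x. (u x)^2)"
  shows "c \<le> 4 * Q powr (3/2)"
proof (cases "c \<le> 0")
  case True
  then show ?thesis using Q by (smt (verit) powr_ge_zero)
next
  case False
  then have c: "c > 0" by simp
  define N where "N = integral {0..1} (\<lambda>x. (u x)^2)"
  define D where "D = integral {0..1} (\<lambda>x. (v x)^2)"
  have Npos: "N > 0" using N by (simp add: N_def)
  have cu2: "continuous_on {0..1} (\<lambda>x. (u x)^2)" by (intro continuous_intros cu)
  have cv2: "continuous_on {0..1} (\<lambda>x. (v x)^2)" by (intro continuous_intros cv)
  have cuv: "continuous_on {0..1} (\<lambda>x. u x * v x)" by (intro continuous_intros cu cv)
  have DQ: "D \<le> Q * N" using en by (simp add: D_def N_def)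
  have sQ: "sqrt Q > 0" using Q by simp
  have QsQ: "Q / sqrt Q = sqrt Q" using Q by (metis real_div_sqrt less_imp_le)
  have A: "integral {0..1} (\<lambda>x. u x * v x) \<le> sqrt Q * N"
  proof -
    let ?s = "1 / sqrt Q"
    have "integral {0..1} (\<lambda>x. u x * v x) \<le> integral {0..1} (\<lambda>x. (?s * (v x)^2 + (u x)^2 / ?s) / 2)"
      by (intro integral_le integrable_continuous_interval cuv continuous_intros cu cv amgm_s) (use sQ in auto)
    also have "\<dots> = (?s * D + N / ?s) / 2"
    proof -
      have "(\<lambda>x. (?s * (v x)^2 + (u x)^2 / ?s) / 2) = (\<lambda>x. (?s/2) * (v x)^2 + (1 / (2 * ?s)) * (u x)^2)"
        by (rule ext) (simp add: field_simps)
      then have "integral {0..1} (\<lambda>x. (?s * (v x)^2 + (u x)^2 / ?s) / 2) = integral {0..1} (\<lambda>x. (?s/2) * (v x)^2 + (1 / (2 * ?s)) * (u x)^2)"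
        by simp
      also have "\<dots> = (?s/2) * D + (1 / (2 * ?s)) * N"
        unfolding D_def N_def
        by (rule int_lin[OF integrable_continuous_interval[OF cv2] integrable_continuous_interval[OF cu2]])
      finally show ?thesis by (simp add: field_simps)
    qed
    also have "\<dots> \<le> (?s * (Q * N) + N / ?s) / 2"
      using DQ sQ by (intro divide_right_mono add_right_mono mult_left_mono) auto
    also have "\<dots> = sqrt Q * N"
      using sQ QsQ by (simp add: field_simps)
    finally show ?thesis .
  qed
  have B: "(u x)^2 \<le> Q * N" if x: "x \<in> {0..1}" for x
  proof -
    define s where "s = 1 / sqrt (Q * N)"
    have sqQN: "sqrt (Q * N) > 0" using Q Npos by simp
    have s: "s > 0" using sqQN by (simp add: s_def)
    have cvx: "continuous_on {x..1} v" using x by (intro continuous_on_subset[OF cv]) auto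
    have cv2x: "continuous_on {x..1} (\<lambda>t. (v t)^2)" using x by (intro continuous_on_subset[OF cv2]) auto
    have "u x \<le> integral {x..1} v" using pw[OF x] .
    also have "\<dots> \<le> integral {x..1} (\<lambda>t. (s * (v t)^2 + 1^2 / s) / 2)"
      using amgm_s[OF s, of 1] by (intro integral_le integrable_continuous_interval cvx continuous_intros cv2x) auto
    also have "\<dots> = (s * integral {x..1} (\<lambda>t. (v t)^2) + (1 - x) / s) / 2"
    proof -
      have "(\<lambda>t. (s * (v t)^2 + 1^2 / s) / 2) = (\<lambda>t. (s/2) * (v t)^2 + (1 / (2 * s)) * 1)"
        by (rule ext) (simp add: field_simps)
      then have "integral {x..1} (\<lambda>t. (s * (v t)^2 + 1^2 / s) / 2) = integral {x..1} (\<lambda>t. (s/2) * (v t)^2 + (1 / (2 * s)) * 1)"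
        by simp
      also have "\<dots> = (s/2) * integral {x..1} (\<lambda>t. (v t)^2) + (1 / (2 * s)) * integral {x..1} (\<lambda>t. 1)"
        by (rule int_lin[OF integrable_continuous_interval[OF cv2x]]) (rule integrable_const_ivl)
      also have "\<dots> = (s/2) * integral {x..1} (\<lambda>t. (v t)^2) + (1 - x) / (2 * s)"
        using x by simp
      finally show ?thesis using s by (simp add: field_simps)
    qed
    also have "\<dots> \<le> (s * D + 1 / s) / 2"
    proof -
      have "integral {x..1} (\<lambda>t. (v t)^2) \<le> D"
        unfolding D_def using x nn by (intro int_sub_le cv2) auto
      moreover have "(1 - x) / s \<le> 1 / s" using x s by (simp add: divide_right_mono)
      ultimately have "s * integral {x..1} (\<lambda>t. (v t)^2) \<le> s * D" "(1 - x) / s \<le> 1 / s"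
        using s by (auto intro: mult_left_mono)
      then have "s * integral {x..1} (\<lambda>t. (v t)^2) + (1 - x) / s \<le> s * D + 1 / s" by (rule add_mono)
      then show ?thesis by (rule divide_right_mono) simp
    qed
    also have "\<dots> \<le> (s * (Q * N) + 1 / s) / 2"
      using DQ s by (intro divide_right_mono add_right_mono mult_left_mono) auto
    also have "\<dots> = sqrt (Q * N)"
    proof -
      have "s * (Q * N) = (Q * N) / sqrt (Q * N)" by (simp add: s_def)
      also have "\<dots> = sqrt (Q * N)" using Q Npos by (intro real_div_sqrt) simp
      finally have "s * (Q * N) = sqrt (Q * N)" .
      then show ?thesis by (simp add: s_def)
    qed
    finally have "u x \<le> sqrt (Q * N)" .
    then have "(u x)^2 \<le> (sqrt (Q * N))^2" using nn[OF x] by (intro power_mono) auto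
    then show ?thesis using Q Npos by simp
  qed
  have Q1: "Q \<ge> 1"
  proof -
    have "integral {0..1} (\<lambda>x. (u x)^2) \<le> integral {0..1} (\<lambda>x::real. Q * N)"
    proof (rule integral_le)
      show "(\<lambda>x. (u x)^2) integrable_on {0..1}" by (rule integrable_continuous_interval[OF cu2])
      show "(\<lambda>x::real. Q * N) integrable_on {0..1}" by (rule integrable_continuous_interval[OF continuous_on_const])
      show "\<And>x. x \<in> {0..1} \<Longrightarrow> (u x)^2 \<le> Q * N" by (rule B)
    qed
    also have "\<dots> = Q * N" by simp
    finally have "N \<le> Q * N" by (simp add: N_def[symmetric])
    then show ?thesis using Npos by simp
  qed
  define \<delta> where "\<delta> = 1 / (2 * Q)"
  have \<delta>: "0 < \<delta>" "\<delta> \<le> 1" using Q Q1 by (auto simp: \<delta>_def field_simps)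
  have Dst: "integral {\<delta>..1} (\<lambda>x. (u x)^2) \<ge> N / 2"
  proof -
    have "integral {0..\<delta>} (\<lambda>x. (u x)^2) \<le> integral {0..\<delta>} (\<lambda>x. Q * N)"
      using \<delta> B by (intro integral_le integrable_continuous_interval continuous_intros continuous_on_subset[OF cu2]) auto
    also have "\<dots> = \<delta> * (Q * N)" using \<delta> by simp
    also have "\<dots> = N / 2" using Q by (simp add: \<delta>_def field_simps)
    finally have 1: "integral {0..\<delta>} (\<lambda>x. (u x)^2) \<le> N / 2" .
    have "integral {0..\<delta>} (\<lambda>x. (u x)^2) + integral {\<delta>..1} (\<lambda>x. (u x)^2) = N"
      unfolding N_def using \<delta> by (intro Henstock_Kurzweil_Integration.integral_combine integrable_continuous_interval cu2) auto
    then show ?thesis using 1 by linarith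
  qed
  have cIa: "continuous_on {0..\<delta>} (\<lambda>x. \<bar>Ip x\<bar>)" using \<delta> by (intro continuous_intros continuous_on_subset[OF cI]) auto
  have E: "\<delta> * (c * (N/2)) \<le> integral {0..\<delta>} (\<lambda>x. \<bar>Ip x\<bar>)"
  proof -
    have "integral {0..\<delta>} (\<lambda>x. c * (N/2)) \<le> integral {0..\<delta>} (\<lambda>x. \<bar>Ip x\<bar>)"
    proof (intro integral_le integrable_continuous_interval cIa continuous_intros)
      fix x assume x: "x \<in> {0..\<delta>}"
      then have x1: "x \<in> {0..1}" using \<delta> by auto
      have "N / 2 \<le> integral {\<delta>..1} (\<lambda>x. (u x)^2)" using Dst .
      also have "\<dots> \<le> integral {x..1} (\<lambda>x. (u x)^2)"
        using x \<delta> nn by (intro int_sub_le continuous_on_subset[OF cu2]) auto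
      finally have "c * (N/2) \<le> c * integral {x..1} (\<lambda>x. (u x)^2)" using c by simp
      also have "\<dots> \<le> \<bar>Ip x\<bar>" using low[OF x1] .
      finally show "c * (N/2) \<le> \<bar>Ip x\<bar>" .
    qed
    moreover have "integral {0..\<delta>} (\<lambda>x. c * (N/2)) = \<delta> * (c * (N/2))" using \<delta> by simp
    ultimately show ?thesis by linarith
  qed
  have F: "integral {0..\<delta>} (\<lambda>x. \<bar>Ip x\<bar>) \<le> sqrt Q * N"
  proof -
    have "integral {0..\<delta>} (\<lambda>x. \<bar>Ip x\<bar>) \<le> integral {0..\<delta>} (\<lambda>x. u x * v x)"
      using \<delta> bnd by (intro integral_le integrable_continuous_interval cIa continuous_on_subset[OF cuv]) auto
    also have "\<dots> \<le> integral {0..1} (\<lambda>x. u x * v x)"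
      using \<delta> nn by (intro int_sub_le cuv) auto
    finally show ?thesis using A by simp
  qed
  have "c * N / (4 * Q) \<le> sqrt Q * N"
    using E F by (simp add: \<delta>_def field_simps)
  then have "c \<le> 4 * Q * sqrt Q" using Npos Q by (simp add: field_simps)
  moreover have "Q powr (3/2) = Q * sqrt Q"
  proof -
    have "Q powr (3/2) = Q powr (1 + 1/2)" by simp
    also have "\<dots> = Q powr 1 * Q powr (1/2)" by (rule powr_add)
    also have "\<dots> = Q * sqrt Q" using Q by (simp add: powr_half_sqrt)
    finally show ?thesis .
  qed
  ultimately show ?thesis by simp
qed


lemma hi_eq:
  "(f has_integral i) S \<Longrightarrow> (\<And>x. x \<in> S \<Longrightarrow> f x = g x) \<Longrightarrow> i = j \<Longrightarrow> (g has_integral j) S"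
  by (metis has_integral_eq)

lemma int_le_ae:
  fixes f g :: "real \<Rightarrow> real"
  assumes "(f has_integral i) S" "(g has_integral j) S" "negligible E" "\<And>x. x \<in> S - E \<Longrightarrow> f x \<le> g x"
  shows "i \<le> j"
proof -
  have "((\<lambda>x. if x \<in> E then g x else f x) has_integral i) S"
    by (rule has_integral_spike[OF assms(3) _ assms(1)]) auto
  then show ?thesis by (rule has_integral_le[OF _ assms(2)]) (use assms(4) in auto)
qed

lemma refl01: "integral {0..1} (\<lambda>x. f (-x)) = integral {-1..0} (f::real\<Rightarrow>real)"
  using Henstock_Kurzweil_Integration.integral_reflect_real[of 0 "-1" f] by simp

lemma reflx: "integral {x..1} (\<lambda>t. f (-t)) = integral {-1..-x} (f::real\<Rightarrow>real)"
  using Henstock_Kurzweil_Integration.integral_reflect_real[of "-x" "-1" f] by simp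

lemma half_left:
  fixes u v Ip :: "real \<Rightarrow> real" and Q c :: real
  assumes cu: "continuous_on {-1..0} u" and cv: "continuous_on {-1..0} v" and cI: "continuous_on {-1..0} Ip"
    and nn: "\<And>x. x \<in> {-1..0} \<Longrightarrow> 0 \<le> u x \<and> 0 \<le> v x"
    and bnd: "\<And>x. x \<in> {-1..0} \<Longrightarrow> \<bar>Ip x\<bar> \<le> u x * v x"
    and en: "integral {-1..0} (\<lambda>x. (v x)^2) \<le> Q * integral {-1..0} (\<lambda>x. (u x)^2)"
    and pw: "\<And>x. x \<in> {-1..0} \<Longrightarrow> u x \<le> integral {-1..x} v"
    and low: "\<And>x. x \<in> {-1..0} \<Longrightarrow> c * integral {-1..x} (\<lambda>t. (u t)^2) \<le> \<bar>Ip x\<bar>"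
    and Q: "0 < Q" and N: "0 < integral {-1..0} (\<lambda>x. (u x)^2)"
  shows "c \<le> 4 * Q powr (3/2)"
proof (rule half[of "\<lambda>x. u (-x)" "\<lambda>x. v (-x)" "\<lambda>x. Ip (-x)" Q c])
  have im: "uminus ` {0..1::real} \<subseteq> {-1..0}" by auto
  show "continuous_on {0..1} (\<lambda>x. u (- x))"
    by (rule continuous_on_compose2[OF cu continuous_on_minus[OF continuous_on_id] im])
  show "continuous_on {0..1} (\<lambda>x. v (- x))"
    by (rule continuous_on_compose2[OF cv continuous_on_minus[OF continuous_on_id] im])
  show "continuous_on {0..1} (\<lambda>x. Ip (- x))"
    by (rule continuous_on_compose2[OF cI continuous_on_minus[OF continuous_on_id] im])
  show "\<And>x. x \<in> {0..1} \<Longrightarrow> 0 \<le> u (- x) \<and> 0 \<le> v (- x)" using nn by auto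
  show "\<And>x. x \<in> {0..1} \<Longrightarrow> \<bar>Ip (- x)\<bar> \<le> u (- x) * v (- x)" using bnd by auto
  show "integral {0..1} (\<lambda>x. (v (- x))\<^sup>2) \<le> Q * integral {0..1} (\<lambda>x. (u (- x))\<^sup>2)"
    using en refl01[of "\<lambda>x. (v x)^2"] refl01[of "\<lambda>x. (u x)^2"] by simp
  show "u (- x) \<le> integral {x..1} (\<lambda>x. v (- x))" if "x \<in> {0..1}" for x
    using pw[of "-x"] that reflx[of x v] by simp
  show "c * integral {x..1} (\<lambda>t. (u (- t))\<^sup>2) \<le> \<bar>Ip (- x)\<bar>" if "x \<in> {0..1}" for x
    using low[of "-x"] that reflx[of x "\<lambda>x. (u x)^2"] by simp
  show "0 < Q" by (rule Q)
  show "0 < integral {0..1} (\<lambda>x. (u (- x))\<^sup>2)" using N refl01[of "\<lambda>x. (u x)^2"] by simp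
qed




theorem theorem1p4:
  fixes q w :: "real \<Rightarrow> real" and q0 w0 :: real and lam :: complex
  assumes "set_integrable lebesgue {-1..1} q"
    and "set_integrable lebesgue {-1..1} w"
    and "AE x in lebesgue. x \<in> {-1..1} \<longrightarrow> q x = q (-x)"
    and "AE x in lebesgue. x \<in> {-1..1} \<longrightarrow> w (-x) = - w x"
    and "AE x in lebesgue. x \<in> {-1..1} \<longrightarrow> x * w x > 0"
    and "q0 < 0" and "w0 > 0"
    and "AE x in lebesgue. x \<in> {-1..1} \<longrightarrow> q x \<ge> q0"
    and "AE x in lebesgue. x \<in> {-1..1} \<longrightarrow> \<bar>w x\<bar> \<ge> w0"
    and "Re lam = 0" and "lam \<noteq> 0"
    and "is_eigenvalue q w lam"
  shows "\<bar>Im lam\<bar> \<le> 4 * (- q0) powr (3/2) / w0"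
proof -
  from assms(12) obtain y y' :: "real \<Rightarrow> complex" where
    nz: "\<exists>x\<in>{-1..1}. y x \<noteq> 0" and acy: "abs_continuous_on {-1..1} y" and acy': "abs_continuous_on {-1..1} y'"
    and dy: "\<forall>x\<in>{-1..1}. (y has_vector_derivative y' x) (at x within {-1..1})"
    and ode: "AE x in lebesgue. x \<in> {-1..1} \<longrightarrow>
            (\<exists>y''. (y' has_vector_derivative y'') (at x within {-1..1}) \<and>
                   - y'' + complex_of_real (q x) * y x = lam * complex_of_real (w x) * y x)"
    and ym1: "y (-1) = 0" and y1: "y 1 = 0"
    unfolding is_eigenvalue_def by blast
  define \<alpha> where "\<alpha> = Im lam"
  have lam: "lam = \<i> * complex_of_real \<alpha>" using assms(10) by (simp add: \<alpha>_def complex_eq_iff)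
  have \<alpha>0: "\<alpha> \<noteq> 0" using assms(11) lam by auto
  obtain E1 where E1: "negligible E1" "{x. \<not> (x \<in> {-1..1} \<longrightarrow>
            (\<exists>y''. (y' has_vector_derivative y'') (at x within {-1..1}) \<and>
                   - y'' + complex_of_real (q x) * y x = lam * complex_of_real (w x) * y x))} \<subseteq> E1"
    using ode unfolding eventually_ae_filter_negligible by blast
  obtain E2 where E2: "negligible E2" "{x. \<not> (x \<in> {-1..1} \<longrightarrow> x * w x > 0)} \<subseteq> E2"
    using assms(5) unfolding eventually_ae_filter_negligible by blast
  obtain E3 where E3: "negligible E3" "{x. \<not> (x \<in> {-1..1} \<longrightarrow> q x \<ge> q0)} \<subseteq> E3"
    using assms(8) unfolding eventually_ae_filter_negligible by blast
  obtain E4 where E4: "negligible E4" "{x. \<not> (x \<in> {-1..1} \<longrightarrow> \<bar>w x\<bar> \<ge> w0)} \<subseteq> E4"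
    using assms(9) unfolding eventually_ae_filter_negligible by blast
  define E where "E = E1 \<union> E2 \<union> E3 \<union> E4 \<union> {0}"
  have negE: "negligible E" unfolding E_def using E1(1) E2(1) E3(1) E4(1) by auto
  have gode: "\<exists>y''. (y' has_vector_derivative y'') (at x within {-1..1}) \<and>
                   - y'' + complex_of_real (q x) * y x = lam * complex_of_real (w x) * y x"
    if "x \<in> {-1..1} - E" for x using E1(2) that by (auto simp: E_def)
  have gw: "x * w x > 0" if "x \<in> {-1..1} - E" for x using E2(2) that by (auto simp: E_def)
  have gq: "q x \<ge> q0" if "x \<in> {-1..1} - E" for x using E3(2) that by (auto simp: E_def)
  have gw0: "\<bar>w x\<bar> \<ge> w0" if "x \<in> {-1..1} - E" for x using E4(2) that by (auto simp: E_def)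
  have gx0: "x \<noteq> 0" if "x \<in> {-1..1} - E" for x using that by (auto simp: E_def)
  have cy: "continuous_on {-1..1} y" using ac_continuous[OF acy] .
  have cy': "continuous_on {-1..1} y'" using ac_continuous[OF acy'] .
  define Y where "Y x = (cmod (y x))^2" for x
  define Yd where "Yd x = (cmod (y' x))^2" for x
  define P where "P x = y' x * cnj (y x)" for x
  define g where "g x = complex_of_real (q x * Y x + Yd x) - \<i> * complex_of_real (\<alpha> * (w x * Y x))" for x
  have acP: "abs_continuous_on {-1..1} P" unfolding P_def by (intro ac_mult ac_cnj acy acy')
  have cP: "continuous_on {-1..1} P" using ac_continuous[OF acP] .
  have derP: "(P has_vector_derivative g x) (at x within {-1..1})" if x: "x \<in> {-1..1} - E" for x
  proof -
    obtain y'' where d2: "(y' has_vector_derivative y'') (at x within {-1..1})"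
      and eq: "- y'' + complex_of_real (q x) * y x = lam * complex_of_real (w x) * y x"
      using gode[OF x] by blast
    have d1: "((\<lambda>x. cnj (y x)) has_vector_derivative cnj (y' x)) (at x within {-1..1})"
      using has_vector_derivative_cnj dy x by auto
    have "(P has_vector_derivative (y' x * cnj (y' x) + y'' * cnj (y x))) (at x within {-1..1})"
      unfolding P_def by (rule has_vector_derivative_mult[OF d2 d1])
    moreover have "y' x * cnj (y' x) + y'' * cnj (y x) = g x"
    proof -
      have y2: "y'' = complex_of_real (q x) * y x - lam * complex_of_real (w x) * y x"
        by (subst eq[symmetric]) simp
      have n1: "y x * cnj (y x) = complex_of_real (Y x)" unfolding Y_def by (rule complex_norm_square[symmetric])
      have n2: "y' x * cnj (y' x) = complex_of_real (Yd x)" unfolding Yd_def by (rule complex_norm_square[symmetric])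
      have "y' x * cnj (y' x) + y'' * cnj (y x)
          = complex_of_real (Yd x) + (complex_of_real (q x) - \<i> * complex_of_real \<alpha> * complex_of_real (w x)) * (y x * cnj (y x))"
        unfolding n2 y2 lam by (simp add: algebra_simps)
      also have "\<dots> = g x" unfolding n1 g_def by (simp add: algebra_simps)
      finally show ?thesis .
    qed
    ultimately show ?thesis by simp
  qed
  have FTC: "(g has_integral (P b - P a)) {a..b}" if ab: "-1 \<le> a" "a \<le> b" "b \<le> 1" for a b
  proof (rule ftc_ac[OF ab(2) ac_subset[OF acP] negE])
    show "{a..b} \<subseteq> {-1..1}" using ab by auto
    show "(P has_vector_derivative g x) (at x within {a..b})" if "x \<in> {a..b} - E" for x
      using has_vector_derivative_within_subset[OF derP[of x]] that ab by auto
  qed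
  have ReI: "((\<lambda>x. q x * Y x + Yd x) has_integral Re (P b - P a)) {a..b}"
    if ab: "-1 \<le> a" "a \<le> b" "b \<le> 1" for a b
    using has_integral_linear[OF FTC[OF ab] bounded_linear_Re] by (simp add: o_def g_def)
  have ImI: "((\<lambda>x. - (\<alpha> * (w x * Y x))) has_integral Im (P b - P a)) {a..b}"
    if ab: "-1 \<le> a" "a \<le> b" "b \<le> 1" for a b
    using has_integral_linear[OF FTC[OF ab] bounded_linear_Im] by (simp add: o_def g_def)
  have cY: "continuous_on {-1..1} Y" unfolding Y_def by (intro continuous_intros cy)
  have cYd: "continuous_on {-1..1} Yd" unfolding Yd_def by (intro continuous_intros cy')
  have Yint: "(Y has_integral integral {a..b} Y) {a..b}" if ab: "-1 \<le> a" "b \<le> 1" for a b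
    using integrable_continuous_interval[OF continuous_on_subset[OF cY]] ab by auto
  have Ydint: "(Yd has_integral integral {a..b} Yd) {a..b}" if ab: "-1 \<le> a" "b \<le> 1" for a b
    using integrable_continuous_interval[OF continuous_on_subset[OF cYd]] ab by auto
  have Ynn: "Y x \<ge> 0" "Yd x \<ge> 0" for x by (auto simp: Y_def Yd_def)
  have qYI: "((\<lambda>x. q x * Y x) has_integral (Re (P b - P a) - integral {a..b} Yd)) {a..b}"
    if ab: "-1 \<le> a" "a \<le> b" "b \<le> 1" for a b
    using has_integral_diff[OF ReI[OF ab] Ydint[of a b]] ab by simp
  have wYI: "((\<lambda>x. w x * Y x) has_integral (Im (P a) - Im (P b)) / \<alpha>) {a..b}"
    if ab: "-1 \<le> a" "a \<le> b" "b \<le> 1" for a b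
  proof (rule hi_eq[OF has_integral_cmul[OF ImI[OF ab], of "- 1 / \<alpha>"]])
    show "(- 1 / \<alpha>) *\<^sub>R - (\<alpha> * (w x * Y x)) = w x * Y x" for x using \<alpha>0 by simp
    show "(- 1 / \<alpha>) *\<^sub>R Im (P b - P a) = (Im (P a) - Im (P b)) / \<alpha>" using \<alpha>0 by (simp add: field_simps)
  qed
  have qbound: "q0 * integral {a..b} Y \<le> Re (P b - P a) - integral {a..b} Yd"
    if ab: "-1 \<le> a" "a \<le> b" "b \<le> 1" for a b
  proof (rule int_le_ae[OF _ qYI[OF ab] negE])
    show "((\<lambda>x. q0 * Y x) has_integral q0 * integral {a..b} Y) {a..b}"
      using has_integral_cmul[OF Yint[of a b], of q0] ab by simp
    show "q0 * Y x \<le> q x * Y x" if "x \<in> {a..b} - E" for x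
      using gq[of x] that ab Ynn(1)[of x] by (auto intro: mult_right_mono)
  qed
  have P1: "P 1 = 0" "P (-1) = 0" by (simp_all add: P_def y1 ym1)
  have cu_all: "continuous_on {-1..1} (\<lambda>x. cmod (y x))" by (intro continuous_intros cy)
  have cv_all: "continuous_on {-1..1} (\<lambda>x. cmod (y' x))" by (intro continuous_intros cy')
  have cI_all: "continuous_on {-1..1} (\<lambda>x. Im (P x))" by (intro continuous_intros cP)
  have bnd_all: "\<bar>Im (P x)\<bar> \<le> cmod (y x) * cmod (y' x)" for x
  proof -
    have "\<bar>Im (P x)\<bar> \<le> cmod (P x)" by (rule abs_Im_le_cmod)
    also have "\<dots> = cmod (y x) * cmod (y' x)" by (simp add: P_def norm_mult)
    finally show ?thesis .
  qed
  have YE: "Y = (\<lambda>x. (cmod (y x))^2)" by (rule ext) (simp add: Y_def)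
  have YdE: "Yd = (\<lambda>x. (cmod (y' x))^2)" by (rule ext) (simp add: Yd_def)
  have dysub: "(y has_vector_derivative y' t) (at t within {a..b})" if "-1 \<le> a" "b \<le> 1" "t \<in> {a..b}" for a b t
    using has_vector_derivative_within_subset[of y "y' t" t "{-1..1}" "{a..b}"] dy that by auto
  have y'int: "y' integrable_on {a..b}" if "-1 \<le> a" "b \<le> 1" for a b
    using integrable_continuous_interval[OF continuous_on_subset[OF cy']] that by auto
  have ny'int: "(\<lambda>t. cmod (y' t)) integrable_on {a..b}" if "-1 \<le> a" "b \<le> 1" for a b
    using integrable_continuous_interval[OF continuous_on_subset[OF cv_all]] that by auto
  have low_gen: "\<bar>\<alpha>\<bar> * w0 * I \<le> \<bar>Im (P x)\<bar>" if "w0 * I \<le> Im (P x) / \<alpha>" "I \<ge> 0" for I x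
  proof -
    have "\<bar>\<alpha>\<bar> * w0 * I = \<bar>\<alpha>\<bar> * (w0 * I)" by simp
    also have "\<dots> \<le> \<bar>\<alpha>\<bar> * (Im (P x) / \<alpha>)" using that by (intro mult_left_mono) auto
    also have "\<dots> \<le> \<bar>\<alpha>\<bar> * \<bar>Im (P x) / \<alpha>\<bar>" by (intro mult_left_mono abs_ge_self) simp
    also have "\<dots> = \<bar>Im (P x)\<bar>" using \<alpha>0 by (simp add: abs_divide)
    finally show ?thesis .
  qed
  have right: "\<bar>\<alpha>\<bar> * w0 \<le> 4 * (-q0) powr (3/2)" if RP: "Re (P 0) \<ge> 0" and NR: "integral {0..1} Y > 0"
  proof (rule half[of "\<lambda>x. cmod (y x)" "\<lambda>x. cmod (y' x)" "\<lambda>x. Im (P x)" "-q0" "\<bar>\<alpha>\<bar> * w0"])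
    show "continuous_on {0..1} (\<lambda>x. cmod (y x))" by (rule continuous_on_subset[OF cu_all]) auto
    show "continuous_on {0..1} (\<lambda>x. cmod (y' x))" by (rule continuous_on_subset[OF cv_all]) auto
    show "continuous_on {0..1} (\<lambda>x. Im (P x))" by (rule continuous_on_subset[OF cI_all]) auto
    show "\<And>x. x \<in> {0..1} \<Longrightarrow> 0 \<le> cmod (y x) \<and> 0 \<le> cmod (y' x)" by simp
    show "\<And>x. x \<in> {0..1} \<Longrightarrow> \<bar>Im (P x)\<bar> \<le> cmod (y x) * cmod (y' x)" by (rule bnd_all)
    show "integral {0..1} (\<lambda>x. (cmod (y' x))\<^sup>2) \<le> - q0 * integral {0..1} (\<lambda>x. (cmod (y x))\<^sup>2)"
    proof -
      have "q0 * integral {0..1} Y \<le> Re (P 1 - P 0) - integral {0..1} Yd" by (rule qbound) auto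
      then have "integral {0..1} Yd \<le> - q0 * integral {0..1} Y" using P1 RP by simp
      then show ?thesis unfolding YE YdE .
    qed
    show "cmod (y x) \<le> integral {x..1} (\<lambda>x. cmod (y' x))" if x: "x \<in> {0..1}" for x
    proof -
      have "(y' has_integral (y 1 - y x)) {x..1}"
        by (rule fundamental_theorem_of_calculus) (use x dysub[of x 1] in auto)
      then have "integral {x..1} y' = - y x" using y1 by (simp add: integral_unique)
      moreover have "norm (integral {x..1} y') \<le> integral {x..1} (\<lambda>t. cmod (y' t))"
        by (rule Henstock_Kurzweil_Integration.integral_norm_bound_integral[OF y'int ny'int]) (use x in auto)
      ultimately show ?thesis by simp
    qed
    show "\<bar>\<alpha>\<bar> * w0 * integral {x..1} (\<lambda>t. (cmod (y t))\<^sup>2) \<le> \<bar>Im (P x)\<bar>" if x: "x \<in> {0..1}" for x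
    proof -
      have "w0 * integral {x..1} Y \<le> (Im (P x) - Im (P 1)) / \<alpha>"
      proof (rule int_le_ae[OF _ wYI negE])
        show "((\<lambda>t. w0 * Y t) has_integral w0 * integral {x..1} Y) {x..1}"
          using has_integral_cmul[OF Yint[of x 1], of w0] x by simp
        show "w0 * Y t \<le> w t * Y t" if t: "t \<in> {x..1} - E" for t
        proof -
          have t1: "t \<in> {-1..1} - E" using t x by auto
          have "t > 0" using gx0[OF t1] t x by auto
          then have "w t > 0" using gw[OF t1] by (simp add: zero_less_mult_iff)
          then have "w0 \<le> w t" using gw0[OF t1] by simp
          then show ?thesis using Ynn(1)[of t] by (rule mult_right_mono)
        qed
      qed (use x in auto)
      then have "w0 * integral {x..1} Y \<le> Im (P x) / \<alpha>" using P1 by simp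
      moreover have "integral {x..1} Y \<ge> 0"
        using x by (intro integral_nonneg integrable_continuous_interval continuous_on_subset[OF cY]) (auto simp: Ynn)
      ultimately show ?thesis using low_gen unfolding YE by blast
    qed
    show "0 < - q0" using assms(6) by simp
    show "0 < integral {0..1} (\<lambda>x. (cmod (y x))\<^sup>2)" using NR unfolding YE .
  qed
  have left: "\<bar>\<alpha>\<bar> * w0 \<le> 4 * (-q0) powr (3/2)" if RP: "Re (P 0) \<le> 0" and NL: "integral {-1..0} Y > 0"
  proof (rule half_left[of "\<lambda>x. cmod (y x)" "\<lambda>x. cmod (y' x)" "\<lambda>x. Im (P x)" "-q0" "\<bar>\<alpha>\<bar> * w0"])
    show "continuous_on {-1..0} (\<lambda>x. cmod (y x))" by (rule continuous_on_subset[OF cu_all]) auto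
    show "continuous_on {-1..0} (\<lambda>x. cmod (y' x))" by (rule continuous_on_subset[OF cv_all]) auto
    show "continuous_on {-1..0} (\<lambda>x. Im (P x))" by (rule continuous_on_subset[OF cI_all]) auto
    show "\<And>x. x \<in> {-1..0} \<Longrightarrow> 0 \<le> cmod (y x) \<and> 0 \<le> cmod (y' x)" by simp
    show "\<And>x. x \<in> {-1..0} \<Longrightarrow> \<bar>Im (P x)\<bar> \<le> cmod (y x) * cmod (y' x)" by (rule bnd_all)
    show "integral {-1..0} (\<lambda>x. (cmod (y' x))\<^sup>2) \<le> - q0 * integral {-1..0} (\<lambda>x. (cmod (y x))\<^sup>2)"
    proof -
      have "q0 * integral {-1..0} Y \<le> Re (P 0 - P (-1)) - integral {-1..0} Yd" by (rule qbound) auto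
      then have "integral {-1..0} Yd \<le> - q0 * integral {-1..0} Y" using P1 RP by simp
      then show ?thesis unfolding YE YdE .
    qed
    show "cmod (y x) \<le> integral {-1..x} (\<lambda>x. cmod (y' x))" if x: "x \<in> {-1..0}" for x
    proof -
      have "(y' has_integral (y x - y (-1))) {-1..x}"
        by (rule fundamental_theorem_of_calculus) (use x dysub[of "-1" x] in auto)
      then have "integral {-1..x} y' = y x" using ym1 by (simp add: integral_unique)
      moreover have "norm (integral {-1..x} y') \<le> integral {-1..x} (\<lambda>t. cmod (y' t))"
        by (rule Henstock_Kurzweil_Integration.integral_norm_bound_integral[OF y'int ny'int]) (use x in auto)
      ultimately show ?thesis by simp
    qed
    show "\<bar>\<alpha>\<bar> * w0 * integral {-1..x} (\<lambda>t. (cmod (y t))\<^sup>2) \<le> \<bar>Im (P x)\<bar>" if x: "x \<in> {-1..0}" for x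
    proof -
      have "(Im (P (-1)) - Im (P x)) / \<alpha> \<le> - w0 * integral {-1..x} Y"
      proof (rule int_le_ae[OF wYI _ negE])
        show "((\<lambda>t. - w0 * Y t) has_integral - w0 * integral {-1..x} Y) {-1..x}"
          using has_integral_cmul[OF Yint[of "-1" x], of "- w0"] x by simp
        show "w t * Y t \<le> - w0 * Y t" if t: "t \<in> {-1..x} - E" for t
        proof -
          have t1: "t \<in> {-1..1} - E" using t x by auto
          have "t < 0" using gx0[OF t1] t x by auto
          then have "w t < 0" using gw[OF t1] by (simp add: zero_less_mult_iff)
          then have "w t \<le> - w0" using gw0[OF t1] by simp
          then show ?thesis using Ynn(1)[of t] by (rule mult_right_mono)
        qed
      qed (use x in auto)
      then have "w0 * integral {-1..x} Y \<le> Im (P x) / \<alpha>" using P1 by (simp add: field_simps)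
      moreover have "integral {-1..x} Y \<ge> 0"
        using x by (intro integral_nonneg integrable_continuous_interval continuous_on_subset[OF cY]) (auto simp: Ynn)
      ultimately show ?thesis using low_gen unfolding YE by blast
    qed
    show "0 < - q0" using assms(6) by simp
    show "0 < integral {-1..0} (\<lambda>x. (cmod (y x))\<^sup>2)" using NL unfolding YE .
  qed
  have zero_int: "Y x = 0" if "-1 \<le> a" "a < b" "b \<le> 1" "integral {a..b} Y = 0" "x \<in> {a..b}" for a b x
  proof (rule has_integral_0_cbox_imp_0[of a b Y x])
    show "continuous_on (cbox a b) Y" using that by (auto intro: continuous_on_subset[OF cY])
    show "\<And>x. x \<in> box a b \<Longrightarrow> 0 \<le> Y x" by (simp add: Ynn)
    show "(Y has_integral 0) (cbox a b)" using Yint[of a b] that by simp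
    show "box a b \<noteq> {}" using that by simp
    show "x \<in> cbox a b" using that by simp
  qed
  have NRnn: "integral {0..1} Y \<ge> 0"
    by (intro integral_nonneg integrable_continuous_interval continuous_on_subset[OF cY]) (auto simp: Ynn)
  have NLnn: "integral {-1..0} Y \<ge> 0"
    by (intro integral_nonneg integrable_continuous_interval continuous_on_subset[OF cY]) (auto simp: Ynn)
  have case_ok: "(Re (P 0) \<ge> 0 \<and> integral {0..1} Y > 0) \<or> (Re (P 0) \<le> 0 \<and> integral {-1..0} Y > 0)"
  proof (rule ccontr)
    assume H: "\<not> ?thesis"
    have R0: "integral {0..1} Y = 0 \<Longrightarrow> x \<in> {0..1} \<Longrightarrow> y x = 0" for x
      using zero_int[of 0 1 x] by (simp add: Y_def)
    have L0: "integral {-1..0} Y = 0 \<Longrightarrow> x \<in> {-1..0} \<Longrightarrow> y x = 0" for x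
      using zero_int[of "-1" 0 x] by (simp add: Y_def)
    show False
    proof (cases "Re (P 0)" "0::real" rule: linorder_cases)
      case less
      then have "integral {-1..0} Y = 0" using H NLnn by auto
      then have "y 0 = 0" using L0 by simp
      then show False using less by (simp add: P_def)
    next
      case greater
      then have "integral {0..1} Y = 0" using H NRnn by auto
      then have "y 0 = 0" using R0 by simp
      then show False using greater by (simp add: P_def)
    next
      case equal
      then have "integral {0..1} Y = 0" "integral {-1..0} Y = 0" using H NRnn NLnn by auto
      then have "y x = 0" if "x \<in> {-1..1}" for x
        using R0 L0 that by (cases "x \<ge> 0") auto
      then show False using nz by blast
    qed
  qed
  have "\<bar>\<alpha>\<bar> * w0 \<le> 4 * (-q0) powr (3/2)" using case_ok right left by blast
  then show ?thesis using assms(7) by (simp add: \<alpha>_def pos_le_divide_eq)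
qed


end
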